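(* Let $Y_1$ and $Y_2$ be independent positive random variables. Suppose that $\mathbb{P}(Y_1>u)>0$ for all $u$ and that there is a positive function $a(\cdot)$, regularly varying at infinity with index $-\tau$ for some $\tau\ge -1$ (i.e. $\lim_{u\to\infty}a(ux)/a(u)=x^{-\tau}$ for all $x>0$), such that $$\lim_{u\to\infty}\frac{\mathbb{P}(Y_1>u+a(u)t)}{\mathbb{P}(Y_1>u)}=\exp(-t)\quad\text{for all } t\ge 0.$$ Suppose further that the distribution of $Y_2$ has right endpoint equal to $1$. Then $X=Y_1Y_2$ satisfies $$\lim_{u\to\infty}\frac{\mathbb{P}(X>u+a(u)t)}{\mathbb{P}(X>u)}=\exp(-t)\quad\text{for all } t\ge 0,$$ i.e. $X$ belongs to the Gumbel max-domain of attraction with the same scaling function $a$.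
   Context: A random variable $U$ is said to be in the Gumbel max-domain of attraction with scaling function $a$ (written $U\in GMDA(a)$) if $\lim_{u\to\infty}\mathbb{P}(U>u+a(u)t)/\mathbb{P}(U>u)=\exp(-t)$ for all $t\ge 0$. *)

theory Defs
  imports "HOL-Probability.Probability"
begin

definition GMDA :: "'s measure \<Rightarrow> ('s \<Rightarrow> real) \<Rightarrow> (real \<Rightarrow> real) \<Rightarrow> bool" where
  "GMDA M U a \<longleftrightarrow>
     (\<forall>t::real. t \<ge> 0 \<longrightarrow>
        ((\<lambda>u. measure M {w \<in> space M. U w > u + a u * t} / measure M {w \<in> space M. U w > u})
           \<longlongrightarrow> exp (- t)) at_top)"

definition regularly_varying :: "(real \<Rightarrow> real) \<Rightarrow> real \<Rightarrow> bool" where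
  "regularly_varying a \<rho> \<longleftrightarrow>
     (\<forall>x::real. x > 0 \<longrightarrow> ((\<lambda>u. a (u * x) / a u) \<longlongrightarrow> x powr \<rho>) at_top)"

definition right_endpoint :: "'s measure \<Rightarrow> ('s \<Rightarrow> real) \<Rightarrow> ereal" where
  "right_endpoint M Y = (SUP x \<in> {x::real. measure M {w \<in> space M. Y w \<le> x} < 1}. ereal x)"

end

theory Submission
  imports Defs
begin


locale gsetup = prob_space M for M :: "'s measure" +
  fixes Y1 Y2 :: "'s \<Rightarrow> real" and a :: "real \<Rightarrow> real" and \<tau> :: real
  assumes Y1m[measurable]: "Y1 \<in> borel_measurable M" and Y2m[measurable]: "Y2 \<in> borel_measurable M"
    and ind: "indep_var borel Y1 borel Y2"
    and Y2pos: "\<forall>w \<in> space M. Y2 w > 0"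
    and Fpos0: "\<forall>u. measure M {w \<in> space M. Y1 w > u} > 0"
    and apos: "\<forall>u. a u > 0"
    and tau: "\<tau> \<ge> -1" and rv: "regularly_varying a (- \<tau>)"
    and gm: "GMDA M Y1 a"
    and ep: "right_endpoint M Y2 = 1"
begin

definition F :: "real \<Rightarrow> real" where "F u = measure M {w \<in> space M. Y1 w > u}"

lemma F_pos: "F u > 0" using Fpos0 by (simp add: F_def)
lemma F_le1: "F u \<le> 1" by (simp add: F_def)
lemma F_anti: "u \<le> v \<Longrightarrow> F v \<le> F u"
  unfolding F_def by (intro finite_measure_mono) auto

lemma F_meas[measurable]: "F \<in> borel_measurable borel"
proof -
  have "mono (\<lambda>u. - F u)" by (auto simp: mono_def F_anti)
  then have "(\<lambda>u. - F u) \<in> borel_measurable borel" by (rule borel_measurable_mono)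
  then have "(\<lambda>u. - (- F u)) \<in> borel_measurable borel" by measurable
  then show ?thesis by simp
qed

lemma repr: "measure M {w \<in> space M. Y1 w * Y2 w > v} = (\<integral>w. F (v / Y2 w) \<partial>M)"
proof -
  let ?m1 = "distr M borel Y1" and ?m2 = "distr M borel Y2"
  interpret m1: prob_space ?m1 by (rule prob_space_distr) simp
  interpret m2: prob_space ?m2 by (rule prob_space_distr) simp
  interpret p: pair_sigma_finite ?m1 ?m2 ..
  have eq: "?m1 \<Otimes>\<^sub>M ?m2 = distr M (borel \<Otimes>\<^sub>M borel) (\<lambda>x. (Y1 x, Y2 x))"
    using ind indep_var_distribution_eq by blast
  define S where "S = {z::real\<times>real. fst z * snd z > v}"
  have S[measurable]: "S \<in> sets (borel \<Otimes>\<^sub>M borel)"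
  proof -
    have "S = {z \<in> space (borel \<Otimes>\<^sub>M borel). v < fst z * snd z}"
      by (auto simp: S_def space_pair_measure)
    also have "\<dots> \<in> sets (borel \<Otimes>\<^sub>M borel)"
    proof -
      have m: "(\<lambda>z::real\<times>real. fst z * snd z) \<in> borel_measurable (borel \<Otimes>\<^sub>M borel)" by measurable
      show ?thesis using borel_measurable_less[OF borel_measurable_const m] by simp
    qed
    finally show ?thesis .
  qed
  have "emeasure M {w \<in> space M. Y1 w * Y2 w > v} = emeasure (distr M (borel \<Otimes>\<^sub>M borel) (\<lambda>x. (Y1 x, Y2 x))) S"
    by (subst emeasure_distr[OF _ S]) (auto simp: S_def intro!: arg_cong[where f="emeasure M"])
  also have "\<dots> = emeasure (?m1 \<Otimes>\<^sub>M ?m2) S" by (simp add: eq)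
  also have "\<dots> = (\<integral>\<^sup>+z. indicator S z \<partial>(?m1 \<Otimes>\<^sub>M ?m2))" by (simp add: nn_integral_indicator)
  also have "\<dots> = (\<integral>\<^sup>+ y. (\<integral>\<^sup>+ x. indicator S (x, y) \<partial>?m1) \<partial>?m2)"
    by (rule p.nn_integral_snd[symmetric]) measurable
  also have "\<dots> = (\<integral>\<^sup>+ w. (\<integral>\<^sup>+ x. indicator S (x, Y2 w) \<partial>?m1) \<partial>M)"
    by (subst nn_integral_distr) auto
  also have "\<dots> = (\<integral>\<^sup>+ w. ennreal (F (v / Y2 w)) \<partial>M)"
  proof (rule nn_integral_cong)
    fix w assume w: "w \<in> space M"
    have "(\<integral>\<^sup>+ x. indicator S (x, Y2 w) \<partial>?m1) = emeasure ?m1 {x. x * Y2 w > v}"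
    proof -
      have "(\<integral>\<^sup>+ x. indicator S (x, Y2 w) \<partial>?m1) = (\<integral>\<^sup>+ x. indicator {x. v < x * Y2 w} x \<partial>?m1)"
        by (rule nn_integral_cong) (simp add: S_def indicator_def)
      also have "\<dots> = emeasure ?m1 {x. v < x * Y2 w}"
      proof (rule nn_integral_indicator)
        have "{x \<in> space borel. v < x * Y2 w} \<in> sets borel" by measurable
        then show "{x. v < x * Y2 w} \<in> sets ?m1" by simp
      qed
      finally show ?thesis by simp
    qed
    also have "\<dots> = emeasure M {x\<in>space M. Y1 x * Y2 w > v}"
      by (subst emeasure_distr) (auto intro!: arg_cong[where f="emeasure M"])
    also have "{x\<in>space M. Y1 x * Y2 w > v} = {x\<in>space M. Y1 x > v / Y2 w}"
      using Y2pos w by (auto simp: field_simps)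
    finally show "(\<integral>\<^sup>+ x. indicator S (x, Y2 w) \<partial>?m1) = ennreal (F (v / Y2 w))"
      by (simp add: F_def emeasure_eq_measure)
  qed
  also have "\<dots> = ennreal (\<integral>w. F (v / Y2 w) \<partial>M)"
    by (rule nn_integral_eq_integral)
       (auto intro!: integrable_const_bound[where B=1] simp: F_le1 less_imp_le[OF F_pos])
  finally show ?thesis
    by (simp add: emeasure_eq_measure integral_nonneg_AE less_imp_le[OF F_pos])
qed

lemma Y2_gt1: "measure M {w \<in> space M. Y2 w > 1} = 0"
proof -
  let ?S = "{x::real. measure M {w \<in> space M. Y2 w \<le> x} < 1}"
  have ep': "(SUP x \<in> ?S. ereal x) = 1" using ep by (simp add: right_endpoint_def)
  have z: "{w \<in> space M. Y2 w > x} \<in> null_sets M" if "x > 1" for x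
  proof -
    have "x \<notin> ?S"
    proof
      assume "x \<in> ?S"
      then have "ereal x \<le> (SUP x \<in> ?S. ereal x)" by (rule SUP_upper)
      with ep' that show False by simp
    qed
    then have "measure M {w \<in> space M. Y2 w \<le> x} \<ge> 1" by simp
    moreover have "measure M {w \<in> space M. Y2 w > x} = 1 - measure M {w \<in> space M. Y2 w \<le> x}"
    proof -
      have "{w \<in> space M. Y2 w > x} = space M - {w \<in> space M. Y2 w \<le> x}" by auto
      then show ?thesis by (simp add: prob_compl)
    qed
    ultimately have "measure M {w \<in> space M. Y2 w > x} = 0"
      using measure_nonneg[of M "{w \<in> space M. Y2 w > x}"] prob_le_1[of "{w \<in> space M. Y2 w \<le> x}"] by simp
    then show ?thesis by (simp add: null_sets_def emeasure_eq_measure)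
  qed
  have "{w \<in> space M. Y2 w > 1} = (\<Union>n::nat. {w \<in> space M. Y2 w > 1 + 1 / Suc n})"
  proof safe
    fix w assume w: "w \<in> space M" "Y2 w > 1"
    obtain n :: nat where "1 / (Y2 w - 1) < n" using reals_Archimedean2 by blast
    then have "1 < real n * (Y2 w - 1)" using w by (simp add: divide_less_eq mult.commute)
    then have "1 < real (Suc n) * (Y2 w - 1)" using w by (simp add: distrib_right)
    then have "1 / Suc n < Y2 w - 1" by (simp add: divide_less_eq mult.commute)
    then have "1 + 1 / real (Suc n) < Y2 w" by simp
    then show "w \<in> (\<Union>n::nat. {w \<in> space M. Y2 w > 1 + 1 / Suc n})" using w by blast
  next
    fix w n assume "1 + 1 / real (Suc n) < Y2 w"
    moreover have "0 < 1 / real (Suc n)" by simp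
    ultimately show "1 < Y2 w" by linarith
  qed
  also have "\<dots> \<in> null_sets M"
    by (intro null_sets_UN z) (simp add: add_pos_pos)
  finally show ?thesis by (simp add: null_sets_def emeasure_eq_measure)
qed

lemma Y2_lt1: "x < 1 \<Longrightarrow> measure M {w \<in> space M. Y2 w > x} > 0"
proof -
  assume x: "x < 1"
  let ?S = "{x::real. measure M {w \<in> space M. Y2 w \<le> x} < 1}"
  have ep': "(SUP x \<in> ?S. ereal x) = 1" using ep by (simp add: right_endpoint_def)
  then have "ereal x < (SUP x \<in> ?S. ereal x)" using x by simp
  then obtain x' where x': "x' \<in> ?S" "ereal x < ereal x'" by (auto simp: less_SUP_iff)
  have "measure M {w \<in> space M. Y2 w \<le> x} \<le> measure M {w \<in> space M. Y2 w \<le> x'}"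
    using x' by (intro finite_measure_mono) auto
  with x' have lt: "measure M {w \<in> space M. Y2 w \<le> x} < 1" by simp
  have "{w \<in> space M. Y2 w > x} = space M - {w \<in> space M. Y2 w \<le> x}" by auto
  then have "measure M {w \<in> space M. Y2 w > x} = 1 - measure M {w \<in> space M. Y2 w \<le> x}"
    by (simp add: prob_compl)
  with lt show ?thesis by simp
qed

lemma gm_ev: assumes "t \<ge> 0" "\<eta> > 0"
  shows "\<forall>\<^sub>F u in at_top. F (u + a u * t) < (exp (-t) + \<eta>) * F u \<and> F (u + a u * t) > (exp (-t) - \<eta>) * F u"
proof -
  have "((\<lambda>u. F (u + a u * t) / F u) \<longlongrightarrow> exp (-t)) at_top"
    using gm assms unfolding GMDA_def F_def by auto
  then have "\<forall>\<^sub>F u in at_top. dist (F (u + a u * t) / F u) (exp (-t)) < \<eta>"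
    using assms tendstoD by blast
  then show ?thesis
  proof (rule eventually_mono)
    fix u assume "dist (F (u + a u * t) / F u) (exp (- t)) < \<eta>"
    then have "F (u + a u * t) / F u < exp (-t) + \<eta>" "F (u + a u * t) / F u > exp (-t) - \<eta>"
      by (auto simp: dist_real_def abs_less_iff)
    then show "F (u + a u * t) < (exp (-t) + \<eta>) * F u \<and> F (u + a u * t) > (exp (-t) - \<eta>) * F u"
      using F_pos[of u] by (simp add: divide_less_eq less_divide_eq)
  qed
qed

lemma gm_ev': assumes "t \<ge> 0" "\<eta> > 0"
  shows "\<exists>U. \<forall>u\<ge>U. F (u + a u * t) < (exp (-t) + \<eta>) * F u \<and> F (u + a u * t) > (exp (-t) - \<eta>) * F u"
  using gm_ev[OF assms] by (simp add: eventually_at_top_linorder)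

definition Good :: "real \<Rightarrow> real \<Rightarrow> real \<Rightarrow> bool" where
  "Good \<delta> w T \<longleftrightarrow> exp (-1-\<delta>) * F w < F (w+T) \<and> F (w+T) < exp (-1+\<delta>) * F w"

lemma det_fwd: assumes "0 < \<delta>" "\<delta> < 1/4"
  shows "\<exists>W. \<forall>w\<ge>W. \<forall>T. Good \<delta> w T \<longrightarrow> T/(1+2*\<delta>) < a w \<and> a w < T/(1-2*\<delta>)"
proof -
  obtain W1 where W1: "\<forall>u\<ge>W1. F (u + a u * (1+2*\<delta>)) < (exp (-(1+2*\<delta>)) + (exp (-1-\<delta>) - exp (-(1+2*\<delta>)))) * F u"
    using gm_ev'[of "1+2*\<delta>" "exp (-1-\<delta>) - exp (-(1+2*\<delta>))"] assms by auto
  obtain W2 where W2: "\<forall>u\<ge>W2. F (u + a u * (1-2*\<delta>)) > (exp (-(1-2*\<delta>)) - (exp (-(1-2*\<delta>)) - exp (-1+\<delta>))) * F u"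
    using gm_ev'[of "1-2*\<delta>" "exp (-(1-2*\<delta>)) - exp (-1+\<delta>)"] assms by auto
  show ?thesis
  proof (intro exI[of _ "max W1 W2"] allI impI)
    fix w T assume w: "max W1 W2 \<le> w" and G: "Good \<delta> w T"
    have aw: "a w > 0" using apos by auto
    show "T/(1+2*\<delta>) < a w \<and> a w < T/(1-2*\<delta>)"
    proof
      show "T/(1+2*\<delta>) < a w"
      proof (rule ccontr)
        assume "\<not> T/(1+2*\<delta>) < a w"
        then have "a w * (1+2*\<delta>) \<le> T" using assms by (simp add: field_simps)
        then have "F (w + T) \<le> F (w + a w * (1+2*\<delta>))" by (intro F_anti) simp
        also have "\<dots> < exp (-1-\<delta>) * F w" using W1 w by auto
        finally show False using G by (simp add: Good_def)
      qed
      show "a w < T/(1-2*\<delta>)"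
      proof (rule ccontr)
        assume "\<not> a w < T/(1-2*\<delta>)"
        then have "T \<le> a w * (1-2*\<delta>)" using assms by (simp add: field_simps)
        then have "F (w + a w * (1-2*\<delta>)) \<le> F (w + T)" by (intro F_anti) simp
        moreover have "exp (-1+\<delta>) * F w < F (w + a w * (1-2*\<delta>))" using W2 w by auto
        ultimately show False using G by (simp add: Good_def)
      qed
    qed
  qed
qed

lemma det_bwd: assumes "0 < \<delta>" "\<delta> < 1"
  shows "\<exists>W. \<forall>w\<ge>W. \<forall>T. a w * (1-\<delta>/2) \<le> T \<and> T \<le> a w * (1+\<delta>/2) \<longrightarrow> Good \<delta> w T"
proof -
  obtain W1 where W1: "\<forall>u\<ge>W1. F (u + a u * (1+\<delta>/2)) > (exp (-(1+\<delta>/2)) - (exp (-(1+\<delta>/2)) - exp (-1-\<delta>))) * F u"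
    using gm_ev'[of "1+\<delta>/2" "exp (-(1+\<delta>/2)) - exp (-1-\<delta>)"] assms by auto
  obtain W2 where W2: "\<forall>u\<ge>W2. F (u + a u * (1-\<delta>/2)) < (exp (-(1-\<delta>/2)) + (exp (-1+\<delta>) - exp (-(1-\<delta>/2)))) * F u"
    using gm_ev'[of "1-\<delta>/2" "exp (-1+\<delta>) - exp (-(1-\<delta>/2))"] assms by auto
  show ?thesis
  proof (intro exI[of _ "max W1 W2"] allI impI)
    fix w T assume w: "max W1 W2 \<le> w" and T: "a w * (1-\<delta>/2) \<le> T \<and> T \<le> a w * (1+\<delta>/2)"
    have "exp (-1-\<delta>) * F w < F (w + a w * (1+\<delta>/2))" using W1 w by auto
    also have "\<dots> \<le> F (w+T)" using T by (intro F_anti) simp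
    finally have 1: "exp (-1-\<delta>) * F w < F (w+T)" .
    have "F (w+T) \<le> F (w + a w * (1-\<delta>/2))" using T by (intro F_anti) simp
    also have "\<dots> < exp (-1+\<delta>) * F w" using W2 w by auto
    finally show "Good \<delta> w T" using 1 by (simp add: Good_def)
  qed
qed

end


lemma alg1: fixes T1 T2 x d :: real
  assumes "T2 < x*(1+d)" "x*(1-d) < T1" "0<d" "d<1" shows "T2*(1-d) < T1*(1+d)"
proof -
  have "T2*(1-d) < x*(1+d)*(1-d)" using mult_strict_right_mono[OF assms(1), of "1-d"] assms by simp
  also have "x*(1+d)*(1-d) = x*(1-d)*(1+d)" by simp
  also have "\<dots> < T1*(1+d)" using mult_strict_right_mono[OF assms(2), of "1+d"] assms by simp
  finally show ?thesis .
qed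
lemma alg2: fixes av au E E' \<epsilon> :: real
  assumes "0<\<epsilon>" "\<epsilon>\<le>1" "E'>0" "E*E' = 1" "au>0" "E*av*(1-\<epsilon>/4) < au*(1+\<epsilon>/4)"
  shows "av \<le> (1+\<epsilon>)*E'*au"
proof -
  define p where "p = E'*au"
  have p: "p > 0" using assms by (simp add: p_def)
  have "E'*(E*av*(1-\<epsilon>/4)) < E'*(au*(1+\<epsilon>/4))" using assms by (intro mult_strict_left_mono) auto
  also have "E'*(E*av*(1-\<epsilon>/4)) = (E*E')*av*(1-\<epsilon>/4)" by (simp add: field_simps)
  finally have 1: "av*(1-\<epsilon>/4) < p*(1+\<epsilon>/4)" using assms by (simp add: p_def algebra_simps)
  have "(1+\<epsilon>)*p*(1-\<epsilon>/4) - p*(1+\<epsilon>/4) = p*(\<epsilon>*(2-\<epsilon>)/4)" by (simp add: field_simps)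
  moreover have "p*(\<epsilon>*(2-\<epsilon>)/4) \<ge> 0" using p assms by simp
  ultimately have "av*(1-\<epsilon>/4) < ((1+\<epsilon>)*p)*(1-\<epsilon>/4)" using 1 by linarith
  then have "av < (1+\<epsilon>)*p" using assms by (simp add: mult_less_cancel_right)
  then show ?thesis by (simp add: p_def mult.assoc)
qed
lemma alg3: fixes av au E E' \<epsilon> :: real
  assumes "0<\<epsilon>" "\<epsilon>\<le>1" "E'>0" "E*E' = 1" "au>0" "au*(1-\<epsilon>/4) < E*av*(1+\<epsilon>/4)"
  shows "(1-\<epsilon>)*E'*au \<le> av"
proof -
  define p where "p = E'*au"
  have p: "p > 0" using assms by (simp add: p_def)
  have "E'*(au*(1-\<epsilon>/4)) < E'*(E*av*(1+\<epsilon>/4))" using assms by (intro mult_strict_left_mono) auto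
  also have "E'*(E*av*(1+\<epsilon>/4)) = (E*E')*av*(1+\<epsilon>/4)" by (simp add: field_simps)
  finally have 1: "p*(1-\<epsilon>/4) < av*(1+\<epsilon>/4)" using assms by (simp add: p_def algebra_simps)
  have "p*(1-\<epsilon>/4) - (1-\<epsilon>)*p*(1+\<epsilon>/4) = p*(\<epsilon>*(2+\<epsilon>)/4)" by (simp add: field_simps)
  moreover have "p*(\<epsilon>*(2+\<epsilon>)/4) \<ge> 0" using p assms by simp
  ultimately have "((1-\<epsilon>)*p)*(1+\<epsilon>/4) < av*(1+\<epsilon>/4)" using 1 by linarith
  then have "(1-\<epsilon>)*p < av" using assms by (simp add: mult_less_cancel_right)
  then show ?thesis by (simp add: p_def mult.assoc)
qed

context gsetup begin

lemma key_good:
  assumes s: "filterlim s at_top sequentially" and z: "z \<ge> 0" and d: "0 < \<delta>" "\<delta> < 1"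
  shows "\<exists>m. \<forall>n\<ge>m. Good \<delta> (exp z * s n) (exp (-\<tau>*z) * a (s n))"
proof -
  obtain W where W: "\<forall>w\<ge>W. \<forall>T. a w * (1-\<delta>/2) \<le> T \<and> T \<le> a w * (1+\<delta>/2) \<longrightarrow> Good \<delta> w T"
    using det_bwd[OF d] by blast
  define c where "c = exp (-\<tau>*z)"
  have c: "c > 0" by (simp add: c_def)
  have "((\<lambda>u. a (u * exp z) / a u) \<longlongrightarrow> exp z powr (-\<tau>)) at_top"
    using rv unfolding regularly_varying_def by simp
  moreover have "exp z powr (-\<tau>) = c" by (simp add: c_def powr_def)
  ultimately have "((\<lambda>u. a (u * exp z) / a u) \<longlongrightarrow> c) at_top" by simp
  then have lim: "((\<lambda>n. a (s n * exp z) / a (s n)) \<longlongrightarrow> c) sequentially"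
    using s by (rule filterlim_compose)
  have lo: "c / (1+\<delta>/2) < c" using c d by (simp add: divide_less_eq)
  have hi: "c < c / (1-\<delta>/2)" using c d by (simp add: less_divide_eq)
  have ev: "\<forall>\<^sub>F n in sequentially. c / (1+\<delta>/2) < a (s n * exp z) / a (s n) \<and> a (s n * exp z) / a (s n) < c / (1-\<delta>/2) \<and> s n \<ge> max W 0"
    using order_tendstoD(1)[OF lim lo] order_tendstoD(2)[OF lim hi] filterlim_at_top[THEN iffD1, OF s, rule_format, of "max W 0"]
    by eventually_elim auto
  then obtain m where m: "\<forall>n\<ge>m. c / (1+\<delta>/2) < a (s n * exp z) / a (s n) \<and> a (s n * exp z) / a (s n) < c / (1-\<delta>/2) \<and> s n \<ge> max W 0"
    by (auto simp: eventually_sequentially)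
  show ?thesis
  proof (intro exI[of _ m] allI impI)
    fix n assume n: "m \<le> n"
    let ?w = "exp z * s n"
    have r: "c / (1+\<delta>/2) < a ?w / a (s n)" "a ?w / a (s n) < c / (1-\<delta>/2)" and sn: "s n \<ge> max W 0"
      using m n by (auto simp: mult.commute)
    have asn: "a (s n) > 0" using apos by auto
    have "?w \<ge> s n" using sn z by (simp add: mult_le_cancel_right1)
    then have wW: "?w \<ge> W" using sn by simp
    have 1: "a ?w * (1-\<delta>/2) \<le> c * a (s n)"
      using r(2) asn d by (simp add: divide_less_eq less_divide_eq mult.commute)
    have 2: "c * a (s n) \<le> a ?w * (1+\<delta>/2)"
      using r(1) asn d by (simp add: divide_less_eq less_divide_eq mult.commute)
    show "Good \<delta> ?w (exp (-\<tau>*z) * a (s n))"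
      using W wW 1 2 by (simp add: c_def)
  qed
qed

lemma uct1:
  assumes e: "0 < \<epsilon>" "\<epsilon> \<le> 1"
  shows "\<exists>U. \<forall>u\<ge>U. \<forall>h\<in>{0..1}. a (exp h * u) \<le> (1+\<epsilon>) * exp (-\<tau>*h) * a u \<and> (1-\<epsilon>) * exp (-\<tau>*h) * a u \<le> a (exp h * u)"
proof (rule ccontr)
  assume "\<not> ?thesis"
  then have "\<forall>n::nat. \<exists>u h. u \<ge> real n \<and> h \<in> {0..1} \<and> \<not> (a (exp h * u) \<le> (1+\<epsilon>) * exp (-\<tau>*h) * a u \<and> (1-\<epsilon>) * exp (-\<tau>*h) * a u \<le> a (exp h * u))"
    by blast
  then obtain u h where uh: "\<And>n. u n \<ge> real n" "\<And>n. h n \<in> {0..1}"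
    "\<And>n. \<not> (a (exp (h n) * u n) \<le> (1+\<epsilon>) * exp (-\<tau>*h n) * a (u n) \<and> (1-\<epsilon>) * exp (-\<tau>*h n) * a (u n) \<le> a (exp (h n) * u n))"
    by metis
  define \<delta> where "\<delta> = \<epsilon>/8"
  have d: "0 < \<delta>" "\<delta> < 1/4" "\<delta> < 1" using e by (auto simp: \<delta>_def)
  obtain W1 where W1: "\<forall>w\<ge>W1. \<forall>T. Good \<delta> w T \<longrightarrow> T/(1+2*\<delta>) < a w \<and> a w < T/(1-2*\<delta>)"
    using det_fwd[OF d(1,2)] by blast
  define v where "v n = exp (h n) * u n" for n
  have u0: "u n \<ge> 0" for n using uh(1)[of n] by linarith
  have vu: "v n \<ge> u n" for n
    using uh(2)[of n] u0[of n] by (simp add: v_def mult_le_cancel_right1)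
  have ut: "filterlim u at_top sequentially"
    by (rule filterlim_at_top_mono[OF filterlim_real_sequentially]) (use uh(1) in auto)
  have vt: "filterlim v at_top sequentially"
    by (rule filterlim_at_top_mono[OF ut]) (use vu in auto)
  define A where "A m = {z \<in> space borel. z \<in> {0..2} \<and> (\<forall>n. m \<le> n \<longrightarrow> Good \<delta> (exp z * u n) (exp (-\<tau>*z) * a (u n)))}" for m
  define B where "B m = {z \<in> space borel. z \<in> {0..1} \<and> (\<forall>n. m \<le> n \<longrightarrow> Good \<delta> (exp z * v n) (exp (-\<tau>*z) * a (v n)))}" for m
  have Am: "A m \<in> sets borel" for m unfolding A_def Good_def by measurable
  have Bm: "B m \<in> sets borel" for m unfolding B_def Good_def by measurable
  have Ainc: "incseq A" unfolding incseq_def A_def by auto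
  have Binc: "incseq B" unfolding incseq_def B_def by auto
  have AU: "(\<Union>m. A m) = {0..2}"
  proof
    show "(\<Union>m. A m) \<subseteq> {0..2}" by (auto simp: A_def)
    show "{0..2} \<subseteq> (\<Union>m. A m)"
    proof
      fix z :: real assume z: "z \<in> {0..2}"
      then obtain m where "\<forall>n\<ge>m. Good \<delta> (exp z * u n) (exp (-\<tau>*z) * a (u n))"
        using key_good[OF ut _ d(1,3), of z] by auto
      then show "z \<in> (\<Union>m. A m)" using z by (auto simp: A_def)
    qed
  qed
  have BU: "(\<Union>m. B m) = {0..1}"
  proof
    show "(\<Union>m. B m) \<subseteq> {0..1}" by (auto simp: B_def)
    show "{0..1} \<subseteq> (\<Union>m. B m)"
    proof
      fix z :: real assume z: "z \<in> {0..1}"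
      then obtain m where "\<forall>n\<ge>m. Good \<delta> (exp z * v n) (exp (-\<tau>*z) * a (v n))"
        using key_good[OF vt _ d(1,3), of z] by auto
      then show "z \<in> (\<Union>m. B m)" using z by (auto simp: B_def)
    qed
  qed
  have "(\<lambda>m. measure lborel (A m)) \<longlonglongrightarrow> measure lborel (\<Union>m. A m)"
    by (rule Lim_measure_incseq) (use Am Ainc AU in auto)
  then have limA: "(\<lambda>m. measure lborel (A m)) \<longlonglongrightarrow> 2" using AU by simp
  have "(\<lambda>m. measure lborel (B m)) \<longlonglongrightarrow> measure lborel (\<Union>m. B m)"
    by (rule Lim_measure_incseq) (use Bm Binc BU in auto)
  then have limB: "(\<lambda>m. measure lborel (B m)) \<longlonglongrightarrow> 1" using BU by simp
  have eA: "\<forall>\<^sub>F m in sequentially. measure lborel (A m) > 3/2" using limA by (rule order_tendstoD(1)) simp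
  have eB: "\<forall>\<^sub>F m in sequentially. measure lborel (B m) > 1/2" using limB by (rule order_tendstoD(1)) simp
  have "\<forall>\<^sub>F m in sequentially. measure lborel (A m) > 3/2 \<and> measure lborel (B m) > 1/2"
    using eA eB by eventually_elim auto
  then obtain m0 where m0: "measure lborel (A m0) > 3/2" "measure lborel (B m0) > 1/2"
    by (auto simp: eventually_sequentially)
  define n where "n = max m0 (nat \<lceil>W1\<rceil>)"
  have nm: "m0 \<le> n" by (simp add: n_def)
  have unW: "u n \<ge> W1"
  proof -
    have "real (nat \<lceil>W1\<rceil>) \<le> real n" by (simp add: n_def)
    moreover have "W1 \<le> real (nat \<lceil>W1\<rceil>)" by linarith
    ultimately show ?thesis using uh(1)[of n] by linarith
  qed
  define hh where "hh = h n"
  have hh: "0 \<le> hh" "hh \<le> 1" using uh(2)[of n] by (auto simp: hh_def)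
  define C where "C = {z::real. z - hh \<in> B m0}"
  have Cm: "C \<in> sets borel"
  proof -
    have "C = (\<lambda>z. z - hh) -` B m0 \<inter> space borel" by (auto simp: C_def)
    also have "\<dots> \<in> sets borel" using Bm by measurable
    finally show ?thesis .
  qed
  have "emeasure lborel C = emeasure (distr lborel borel ((+) (-hh))) (B m0)"
    using Bm by (subst emeasure_distr) (auto simp: C_def intro!: arg_cong[where f="emeasure lborel"])
  also have "\<dots> = emeasure lborel (B m0)" by (simp add: lborel_distr_plus)
  finally have CB: "measure lborel C = measure lborel (B m0)" by (simp add: measure_def)
  have Csub: "C \<subseteq> {0..2}"
  proof
    fix z assume "z \<in> C"
    then have "z - hh \<in> {0..1}" by (auto simp: C_def B_def)
    then show "z \<in> {0..2}" using hh by auto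
  qed
  have Asub: "A m0 \<subseteq> {0..2}" by (auto simp: A_def)
  have fin: "emeasure lborel X \<noteq> \<infinity>" if "X \<subseteq> {0..2}" "X \<in> sets borel" for X :: "real set"
  proof -
    have "emeasure lborel X \<le> emeasure lborel {0..2::real}"
      using that by (intro emeasure_mono) auto
    then show ?thesis by (auto simp: top_unique)
  qed
  have "A m0 \<inter> C \<noteq> {}"
  proof
    assume dis: "A m0 \<inter> C = {}"
    have "measure lborel (A m0 \<union> C) = measure lborel (A m0) + measure lborel C"
      using fin[OF Asub Am] fin[OF Csub Cm] Am Cm dis by (intro measure_Union) auto
    moreover have "measure lborel (A m0 \<union> C) \<le> measure lborel {0..2::real}"
      using Asub Csub Am Cm by (intro measure_mono_fmeasurable) (auto simp: fmeasurable_def)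
    ultimately show False using m0 CB by simp
  qed
  then obtain z where zA: "z \<in> A m0" and zC: "z \<in> C" by blast
  define w where "w = exp z * u n"
  define T1 where "T1 = exp (-\<tau>*z) * a (u n)"
  define T2 where "T2 = exp (-\<tau>*(z-hh)) * a (v n)"
  have G1: "Good \<delta> w T1" using zA nm by (auto simp: A_def w_def T1_def)
  have "Good \<delta> (exp (z-hh) * v n) T2" using zC nm by (auto simp: C_def B_def T2_def)
  moreover have "exp (z-hh) * v n = w" by (simp add: w_def v_def hh_def exp_diff)
  ultimately have G2: "Good \<delta> w T2" by simp
  have "w \<ge> u n" using zA u0[of n] by (auto simp: A_def w_def mult_le_cancel_right1)
  then have wW: "w \<ge> W1" using unW by simp
  have i1: "T1 < a w * (1+2*\<delta>)" "a w * (1-2*\<delta>) < T1"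
    using W1 wW G1 d by (auto simp: divide_less_eq less_divide_eq)
  have i2: "T2 < a w * (1+2*\<delta>)" "a w * (1-2*\<delta>) < T2"
    using W1 wW G2 d by (auto simp: divide_less_eq less_divide_eq)
  have j1: "T2*(1-2*\<delta>) < T1*(1+2*\<delta>)" using alg1[OF i2(1) i1(2)] d by simp
  have j2: "T1*(1-2*\<delta>) < T2*(1+2*\<delta>)" using alg1[OF i1(1) i2(2)] d by simp
  define k where "k = exp (-\<tau>*z)"
  define E where "E = exp (\<tau>*hh)"
  have T2': "T2 = k * (E * a (v n))" by (simp add: T2_def k_def E_def right_diff_distrib exp_diff exp_minus field_simps)
  have T1': "T1 = k * a (u n)" by (simp add: T1_def k_def)
  have k: "k > 0" by (simp add: k_def)
  have EE: "E * exp (-\<tau>*hh) = 1" by (simp add: E_def flip: exp_add)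
  have "k * (E * a (v n) * (1-\<epsilon>/4)) < k * (a (u n) * (1+\<epsilon>/4))"
    using j1 by (simp add: T1' T2' \<delta>_def algebra_simps)
  then have "E * a (v n) * (1-\<epsilon>/4) < a (u n) * (1+\<epsilon>/4)" using k by simp
  then have up: "a (v n) \<le> (1+\<epsilon>) * exp (-\<tau>*hh) * a (u n)"
    using alg2[OF e, of "exp (-\<tau>*hh)" E "a (u n)" "a (v n)"] EE apos by auto
  have "k * (a (u n) * (1-\<epsilon>/4)) < k * (E * a (v n) * (1+\<epsilon>/4))"
    using j2 by (simp add: T1' T2' \<delta>_def algebra_simps)
  then have "a (u n) * (1-\<epsilon>/4) < E * a (v n) * (1+\<epsilon>/4)" using k by simp
  then have lo: "(1-\<epsilon>) * exp (-\<tau>*hh) * a (u n) \<le> a (v n)"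
    using alg3[OF e, of "exp (-\<tau>*hh)" E "a (u n)" "a (v n)"] EE apos by auto
  show False using uh(3)[of n] up lo by (simp add: v_def hh_def)
qed

end


lemma aux_lin1: fixes E1 E2 c :: real assumes "E2 > 0" "E1 \<le> c" "E1 > 0" shows "(E1-E2)/4 < c" using assms by (simp add: field_simps)
lemma aux_lin2: fixes E1 E2 :: real assumes "E2 < E1" shows "0 < (E1-E2)/4" using assms by simp

lemma contra_lemma:
  fixes p q \<eta> Fu Fx Fy :: real
  assumes p: "0 \<le> p" and pq: "1+p < q" and eta: "\<eta> = (exp (-(1+p)) - exp (-q))/4" and Fu: "Fu > 0"
    and h1: "(exp (-p) - \<eta>) * Fu < Fx" and h2: "(exp (-1) - \<eta>) * Fx < Fy" and h3: "Fy < (exp (-q) + \<eta>) * Fu"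
  shows False
proof -
  have e1: "exp (-(1+p)) = exp (-1) * exp (-p)" by (simp flip: exp_add)
  have lt0: "exp (-q) < exp (-(1+p))" using pq by simp
  have eta0: "\<eta> > 0" unfolding eta by (rule aux_lin2[OF lt0])
  have "exp (-(1+p)) \<le> exp (-1)" using p by simp
  moreover have "exp (-q) > 0" by simp
  ultimately have eta1: "\<eta> < exp (-1)" unfolding eta by (intro aux_lin1) auto
  have ep: "exp (-p) \<le> 1" using p by simp
  have em: "exp (-1) \<le> (1::real)" by simp
  have "(exp (-1) - \<eta>) * ((exp (-p) - \<eta>) * Fu) < (exp (-1) - \<eta>) * Fx"
    using h1 eta1 by (intro mult_strict_left_mono) auto
  also have "\<dots> < (exp (-q) + \<eta>) * Fu" using h2 h3 by linarith
  finally have "((exp (-1) - \<eta>) * (exp (-p) - \<eta>)) * Fu < (exp (-q) + \<eta>) * Fu" by (simp add: mult.assoc)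
  then have lt: "(exp (-1) - \<eta>) * (exp (-p) - \<eta>) < exp (-q) + \<eta>" using Fu by (simp add: mult_less_cancel_right)
  have "(exp (-1) - \<eta>) * (exp (-p) - \<eta>) = exp (-1) * exp (-p) - \<eta> * (exp (-1) + exp (-p)) + \<eta>*\<eta>"
    by (simp add: algebra_simps)
  moreover have "exp (-1) + exp (-p) \<le> 2" using ep em by linarith
  then have "\<eta> * (exp (-1) + exp (-p)) \<le> \<eta> * 2" using eta0 by (intro mult_left_mono) auto
  moreover have "\<eta>*\<eta> \<ge> 0" by simp
  ultimately have "(exp (-1) - \<eta>) * (exp (-p) - \<eta>) \<ge> exp (-(1+p)) - 2*\<eta>" using e1 by linarith
  moreover have "4*\<eta> = exp (-(1+p)) - exp (-q)" using eta by simp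
  ultimately show False using lt eta0 by linarith
qed

context gsetup begin

lemma uct:
  assumes e: "0 < \<epsilon>"
  shows "\<exists>U. \<forall>u\<ge>U. \<forall>h\<in>{0..1}. a (exp h * u) \<le> (1+\<epsilon>) * exp (-\<tau>*h) * a u \<and> (1-\<epsilon>) * exp (-\<tau>*h) * a u \<le> a (exp h * u)"
proof -
  obtain U where U: "\<forall>u\<ge>U. \<forall>h\<in>{0..1}. a (exp h * u) \<le> (1+min \<epsilon> 1) * exp (-\<tau>*h) * a u \<and> (1-min \<epsilon> 1) * exp (-\<tau>*h) * a u \<le> a (exp h * u)"
    using uct1[of "min \<epsilon> 1"] e by auto
  show ?thesis
  proof (intro exI[of _ U] allI impI ballI conjI)
    fix u h assume u: "U \<le> u" and h: "h \<in> {0..1::real}"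
    have p: "exp (-\<tau>*h) * a u > 0" using apos by simp
    have "a (exp h * u) \<le> (1+min \<epsilon> 1) * exp (-\<tau>*h) * a u" using U u h by blast
    also have "\<dots> \<le> (1+\<epsilon>) * exp (-\<tau>*h) * a u"
      using p mult_right_mono[of "1+min \<epsilon> 1" "1+\<epsilon>" "exp (-\<tau>*h) * a u"] by (simp add: mult.assoc)
    finally show "a (exp h * u) \<le> (1+\<epsilon>) * exp (-\<tau>*h) * a u" .
    have "(1-\<epsilon>) * exp (-\<tau>*h) * a u \<le> (1-min \<epsilon> 1) * exp (-\<tau>*h) * a u"
      using p mult_right_mono[of "1-\<epsilon>" "1-min \<epsilon> 1" "exp (-\<tau>*h) * a u"] by (simp add: mult.assoc)
    also have "\<dots> \<le> a (exp h * u)" using U u h by blast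
    finally show "(1-\<epsilon>) * exp (-\<tau>*h) * a u \<le> a (exp h * u)" .
  qed
qed

lemma a_small_m1:
  assumes tm: "\<tau> = -1" and d: "0 < \<delta>" "\<delta> \<le> 1"
  shows "\<exists>U. \<forall>u\<ge>U. a u < \<delta> * u"
proof -
  define R where "R = 2 * exp (1::real)"
  define s0 where "s0 = 1/R"
  define \<theta> where "\<theta> = \<delta>/(2*R)"
  have e2: "exp 1 \<ge> (2::real)" using exp_ge_add_one_self[of "1::real"] by simp
  have R: "R \<ge> 4" using e2 by (simp add: R_def)
  have s0: "0 < s0" using R by (simp add: s0_def)
  have th: "0 < \<theta>" "\<theta> \<le> 1/8" using R d by (auto simp: \<theta>_def field_simps)
  have ds0: "\<delta> * s0 = 2*\<theta>" using R by (simp add: s0_def \<theta>_def field_simps)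
  define q1 where "q1 = 7/8 * exp (1::real)"
  define q2 where "q2 = s0 + 1 + \<theta>"
  have q1: "1 + 1/2 < q1" using e2 by (simp add: q1_def)
  have q2: "1 + s0 < q2" using th by (simp add: q2_def)
  define \<eta>1 where "\<eta>1 = (exp (-(1+1/2)) - exp (-q1))/4"
  define \<eta>2 where "\<eta>2 = (exp (-(1+s0)) - exp (-q2))/4"
  have \<eta>1: "\<eta>1 > 0" unfolding \<eta>1_def by (rule aux_lin2) (use q1 in simp)
  have \<eta>2: "\<eta>2 > 0" unfolding \<eta>2_def by (rule aux_lin2) (use q2 in simp)
  obtain Ua where Ua: "\<forall>u\<ge>Ua. \<forall>h\<in>{0..1}. a (exp h * u) \<le> (1+1/8) * exp (-\<tau>*h) * a u \<and> (1-1/8) * exp (-\<tau>*h) * a u \<le> a (exp h * u)"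
    using uct[of "1/8"] by auto
  obtain Ub where Ub: "\<forall>u\<ge>Ub. \<forall>h\<in>{0..1}. a (exp h * u) \<le> (1+\<theta>/2) * exp (-\<tau>*h) * a u \<and> (1-\<theta>/2) * exp (-\<tau>*h) * a u \<le> a (exp h * u)"
    using uct[of "\<theta>/2"] th by auto
  obtain G1 where G1: "\<forall>u\<ge>G1. F (u + a u * 1) < (exp (-1) + \<eta>1) * F u \<and> F (u + a u * 1) > (exp (-1) - \<eta>1) * F u"
    using gm_ev'[of 1 \<eta>1] \<eta>1 by auto
  obtain G2 where G2: "\<forall>u\<ge>G2. F (u + a u * q1) < (exp (-q1) + \<eta>1) * F u \<and> F (u + a u * q1) > (exp (-q1) - \<eta>1) * F u"
    using gm_ev'[of q1 \<eta>1] \<eta>1 q1 by auto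
  obtain G3 where G3: "\<forall>u\<ge>G3. F (u + a u * (1/2)) < (exp (-(1/2)) + \<eta>1) * F u \<and> F (u + a u * (1/2)) > (exp (-(1/2)) - \<eta>1) * F u"
    using gm_ev'[of "1/2" \<eta>1] \<eta>1 by auto
  obtain G4 where G4: "\<forall>u\<ge>G4. F (u + a u * 1) < (exp (-1) + \<eta>2) * F u \<and> F (u + a u * 1) > (exp (-1) - \<eta>2) * F u"
    using gm_ev'[of 1 \<eta>2] \<eta>2 by auto
  obtain G5 where G5: "\<forall>u\<ge>G5. F (u + a u * q2) < (exp (-q2) + \<eta>2) * F u \<and> F (u + a u * q2) > (exp (-q2) - \<eta>2) * F u"
    using gm_ev'[of q2 \<eta>2] \<eta>2 q2 s0 by auto
  obtain G6 where G6: "\<forall>u\<ge>G6. F (u + a u * s0) < (exp (-s0) + \<eta>2) * F u \<and> F (u + a u * s0) > (exp (-s0) - \<eta>2) * F u"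
    using gm_ev'[of s0 \<eta>2] \<eta>2 s0 by auto
  define U where "U = max 1 (max (max Ua Ub) (max (max G1 G2) (max (max G3 G4) (max G5 G6))))"
  show ?thesis
  proof (intro exI[of _ U] allI impI)
    fix u assume uU: "U \<le> u"
    then have u1: "u \<ge> 1" and uUa: "u \<ge> Ua" and uUb: "u \<ge> Ub" and uG: "u \<ge> G1" "u \<ge> G2" "u \<ge> G3" "u \<ge> G4" "u \<ge> G5" "u \<ge> G6"
      by (auto simp: U_def)
    have au: "a u > 0" using apos by auto
    have Fu: "F u > 0" by (rule F_pos)
    show "a u < \<delta> * u"
    proof (rule ccontr)
      assume "\<not> a u < \<delta> * u"
      then have big: "a u \<ge> \<delta> * u" by simp
      show False
      proof (cases "a u \<ge> R * u")
        case True
        define x where "x = exp 1 * u"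
        have xu: "x \<ge> u" using u1 e2 by (simp add: x_def)
        have "x \<le> u + a u * (1/2)" using True u1 by (simp add: x_def R_def)
        then have "F (u + a u * (1/2)) \<le> F x" by (rule F_anti)
        moreover have "F (u + a u * (1/2)) > (exp (-(1/2)) - \<eta>1) * F u" using G3 uG by auto
        ultimately have h1: "(exp (-(1/2)) - \<eta>1) * F u < F x" by linarith
        have h2: "(exp (-1) - \<eta>1) * F x < F (x + a x * 1)" using G1 uG xu by auto
        have "(1-1/8) * exp (-\<tau>*1) * a u \<le> a (exp 1 * u)" using Ua[rule_format, OF uUa, of 1] by simp
        then have "q1 * a u \<le> a x" using tm by (simp add: q1_def x_def)
        then have "u + a u * q1 \<le> x + a x * 1" using xu by (simp add: mult.commute)
        then have "F (x + a x * 1) \<le> F (u + a u * q1)" by (rule F_anti)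
        moreover have "F (u + a u * q1) < (exp (-q1) + \<eta>1) * F u" using G2 uG by auto
        ultimately have h3: "F (x + a x * 1) < (exp (-q1) + \<eta>1) * F u" by linarith
        show False
          by (rule contra_lemma[of "1/2" q1 \<eta>1 "F u" "F x" "F (x + a x * 1)"]) (use q1 Fu h1 h2 h3 in \<open>simp_all add: \<eta>1_def\<close>)
      next
        case False
        define w where "w = u + a u * s0"
        have wu: "w \<ge> u" using au s0 by (simp add: w_def)
        have u0: "u > 0" using u1 by simp
        have "a u * s0 < u" using False R by (simp add: s0_def field_simps)
        then have w2: "w / u \<le> 2" using u0 by (simp add: w_def field_simps)
        have w1: "w / u \<ge> 1" using wu u0 by simp
        define hh where "hh = ln (w / u)"
        have ehh: "exp hh = w / u" using w1 by (simp add: hh_def)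
        have hh0: "hh \<ge> 0" using w1 by (simp add: hh_def)
        have "hh \<le> w/u - 1" unfolding hh_def by (rule ln_le_minus_one) (use w1 in simp)
        then have hh1: "hh \<le> 1" using w2 by simp
        have ew: "exp hh * u = w" using ehh u0 by simp
        have "(1-\<theta>/2) * exp (-\<tau>*hh) * a u \<le> a (exp hh * u)" using Ub[rule_format, OF uUb, of hh] hh0 hh1 by simp
        then have aw1: "(1-\<theta>/2) * (w/u) * a u \<le> a w" using tm ehh ew by simp
        have "w / u = 1 + a u * s0 / u" using u0 by (simp add: w_def field_simps)
        moreover have "a u * s0 / u \<ge> \<delta> * s0" using big s0 u0 by (simp add: field_simps)
        ultimately have "w / u \<ge> 1 + 2*\<theta>" using ds0 by simp
        then have "(1-\<theta>/2) * (1 + 2*\<theta>) * a u \<le> (1-\<theta>/2) * (w/u) * a u"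
          using th au by (intro mult_right_mono mult_left_mono) auto
        moreover have "(1+\<theta>) * a u \<le> (1-\<theta>/2) * (1 + 2*\<theta>) * a u"
        proof -
          have "(1-\<theta>/2) * (1 + 2*\<theta>) - (1+\<theta>) = \<theta> * (1/2 - \<theta>)" by (simp add: field_simps)
          moreover have "\<theta> * (1/2 - \<theta>) \<ge> 0" using th by simp
          ultimately have "(1+\<theta>) \<le> (1-\<theta>/2) * (1 + 2*\<theta>)" by linarith
          then show ?thesis using au by (intro mult_right_mono) auto
        qed
        ultimately have aw: "(1+\<theta>) * a u \<le> a w" using aw1 by linarith
        have h1: "(exp (-s0) - \<eta>2) * F u < F w" using G6 uG by (auto simp: w_def)
        have h2: "(exp (-1) - \<eta>2) * F w < F (w + a w * 1)" using G4 uG wu by auto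
        have "u + a u * q2 \<le> w + a w * 1" using aw by (simp add: w_def q2_def algebra_simps)
        then have "F (w + a w * 1) \<le> F (u + a u * q2)" by (rule F_anti)
        moreover have "F (u + a u * q2) < (exp (-q2) + \<eta>2) * F u" using G5 uG by auto
        ultimately have h3: "F (w + a w * 1) < (exp (-q2) + \<eta>2) * F u" by linarith
        show False
          by (rule contra_lemma[of s0 q2 \<eta>2 "F u" "F w" "F (w + a w * 1)"]) (use q2 s0 Fu h1 h2 h3 in \<open>simp_all add: \<eta>2_def\<close>)
      qed
    qed
  qed
qed

lemma a_small_gt:
  assumes tg: "\<tau> > -1" and d: "0 < \<delta>"
  shows "\<exists>U. \<forall>u\<ge>U. a u \<le> \<delta> * u"
proof -
  define \<epsilon>0 where "\<epsilon>0 = (exp (1+\<tau>) - 1)/2"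
  have eg: "exp (1+\<tau>) > 1" using tg by simp
  have e0: "\<epsilon>0 > 0" using eg by (simp add: \<epsilon>0_def)
  define \<rho> where "\<rho> = (1+\<epsilon>0)*exp (-(1+\<tau>))"
  have \<rho>0: "\<rho> > 0" using e0 by (simp add: \<rho>_def)
  have "1+\<epsilon>0 < exp (1+\<tau>)" using eg by (simp add: \<epsilon>0_def field_simps)
  moreover have "\<rho> = (1+\<epsilon>0) / exp (1+\<tau>)" unfolding \<rho>_def by (subst exp_minus) (simp add: divide_inverse)
  ultimately have \<rho>1: "\<rho> < 1" by simp
  obtain U0 where U0: "\<forall>u\<ge>U0. \<forall>h\<in>{0..1}. a (exp h * u) \<le> (1+\<epsilon>0) * exp (-\<tau>*h) * a u \<and> (1-\<epsilon>0) * exp (-\<tau>*h) * a u \<le> a (exp h * u)"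
    using uct[OF e0] by auto
  define U where "U = max U0 1"
  have U1: "U \<ge> 1" and UU0: "U \<ge> U0" by (auto simp: U_def)
  define g where "g u = a u / u" for u
  have gstep: "g (exp h * u) \<le> (1+\<epsilon>0) * exp (-(1+\<tau>)*h) * g u" if u: "u \<ge> U" and h: "h \<in> {0..1}" for u h
  proof -
    have up: "u > 0" using u U1 by simp
    have "a (exp h * u) \<le> (1+\<epsilon>0) * exp (-\<tau>*h) * a u" using U0[rule_format, of u h] u UU0 h by auto
    then have "a (exp h * u) / (exp h * u) \<le> (1+\<epsilon>0) * exp (-\<tau>*h) * a u / (exp h * u)"
      using up by (intro divide_right_mono) auto
    also have "\<dots> = (1+\<epsilon>0) * (exp (-\<tau>*h) / exp h) * (a u / u)" by simp
    also have "exp (-\<tau>*h) / exp h = exp (-(1+\<tau>)*h)" by (simp add: exp_diff[symmetric] algebra_simps)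
    finally show ?thesis by (simp add: g_def)
  qed
  have gstep0: "g (exp h * u) \<le> (1+\<epsilon>0) * g u" if u: "u \<ge> U" and h: "h \<in> {0..1}" for u h
  proof -
    have "g u \<ge> 0" using u U1 apos by (simp add: g_def less_imp_le)
    moreover have "exp (-(1+\<tau>)*h) \<le> 1"
    proof -
      have "(1+\<tau>)*h \<ge> 0" using tg h by (intro mult_nonneg_nonneg) auto
      then have "-(1+\<tau>)*h \<le> 0" by (simp only: mult_minus_left neg_le_0_iff_le)
      then show ?thesis by (simp only: exp_le_one_iff)
    qed
    ultimately have "(1+\<epsilon>0) * exp (-(1+\<tau>)*h) * g u \<le> (1+\<epsilon>0) * 1 * g u"
      using e0 by (intro mult_right_mono mult_left_mono) auto
    then show ?thesis using gstep[OF u h] by simp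
  qed
  have ind: "\<forall>h\<in>{0..1}. g (exp (real k + h) * U) \<le> (1+\<epsilon>0) * \<rho>^k * g U" for k :: nat
  proof (induct k)
    case 0
    then show ?case using gstep0[OF order_refl] by simp
  next
    case (Suc k)
    show ?case
    proof
      fix h :: real assume h: "h \<in> {0..1}"
      have ge: "exp (real k + h) * U \<ge> U" using h U1 by (simp add: mult_le_cancel_right1)
      have eqk: "exp (real (Suc k) + h) * U = exp 1 * (exp (real k + h) * U)" by (simp add: exp_add[symmetric] algebra_simps)
      have g1: "g (exp 1 * (exp (real k + h) * U)) \<le> (1+\<epsilon>0) * exp (-(1+\<tau>)*1) * g (exp (real k + h) * U)"
        using gstep[OF ge, of 1] by simp
      have "g (exp (real (Suc k) + h) * U) \<le> (1+\<epsilon>0) * exp (-(1+\<tau>)*1) * g (exp (real k + h) * U)"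
        unfolding eqk by (rule g1)
      also have "\<dots> = \<rho> * g (exp (real k + h) * U)" by (simp add: \<rho>_def)
      also have "\<dots> \<le> \<rho> * ((1+\<epsilon>0) * \<rho>^k * g U)" using Suc h \<rho>0 by (intro mult_left_mono) auto
      finally show "g (exp (real (Suc k) + h) * U) \<le> (1+\<epsilon>0) * \<rho>^(Suc k) * g U" by (simp add: algebra_simps)
    qed
  qed
  have gU: "g U > 0" using U1 apos by (simp add: g_def)
  obtain K where K: "\<rho>^K < \<delta> / ((1+\<epsilon>0) * g U)"
    using real_arch_pow_inv[of "\<delta> / ((1+\<epsilon>0) * g U)" \<rho>] d e0 gU \<rho>1 by auto
  show ?thesis
  proof (intro exI[of _ "exp (real K) * U"] allI impI)
    fix u assume u: "exp (real K) * U \<le> u"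
    have up: "u > 0" using u U1 by (smt (verit) exp_gt_zero mult_pos_pos)
    define L where "L = ln (u / U)"
    have "exp (real K) \<le> u / U" using u U1 by (simp add: field_simps)
    then have LK: "L \<ge> real K" unfolding L_def by (simp add: ln_ge_iff up U1 less_le_trans[OF zero_less_one])
    define k where "k = nat \<lfloor>L\<rfloor>"
    define h where "h = L - real k"
    have L0: "L \<ge> 0" using LK by simp
    have kL: "real k = of_int \<lfloor>L\<rfloor>" using L0 by (simp add: k_def)
    have h: "h \<in> {0..1}" using kL by (simp add: h_def) linarith
    have kK: "K \<le> k" using LK kL by (simp add: k_def le_nat_iff le_floor_iff)
    have "exp (real k + h) * U = u" using up U1 by (simp add: h_def L_def)
    then have "g u \<le> (1+\<epsilon>0) * \<rho>^k * g U" using ind[of k] h by auto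
    also have "\<dots> \<le> (1+\<epsilon>0) * \<rho>^K * g U"
      using power_decreasing[OF kK, of \<rho>] \<rho>0 \<rho>1 e0 gU by (intro mult_right_mono mult_left_mono) auto
    also have "\<dots> \<le> \<delta>"
    proof -
      have pos: "(1+\<epsilon>0)*g U > 0" using e0 gU by simp
      have "\<rho>^K * ((1+\<epsilon>0)*g U) < \<delta>" using K pos by (simp only: less_divide_eq)
      then show ?thesis by (simp add: mult_ac)
    qed
    finally show "a u \<le> \<delta> * u" using up by (simp add: g_def divide_le_eq)
  qed
qed

lemma a_small:
  assumes d: "0 < \<delta>"
  shows "\<exists>U. \<forall>u\<ge>U. a u \<le> \<delta> * u"
proof (cases "\<tau> = -1")
  case True
  obtain U where U: "\<forall>u\<ge>U. a u < min \<delta> 1 * u" using a_small_m1[OF True, of "min \<delta> 1"] d by auto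
  show ?thesis
  proof (intro exI[of _ "max U 0"] allI impI)
    fix u assume u: "max U 0 \<le> u"
    then have "a u < min \<delta> 1 * u" using U by auto
    also have "\<dots> \<le> \<delta> * u" using u by (intro mult_right_mono) auto
    finally show "a u \<le> \<delta> * u" by simp
  qed
next
  case False
  then have "\<tau> > -1" using tau by simp
  then show ?thesis using a_small_gt d by blast
qed

lemma rapid:
  assumes c: "c > 1" and e: "\<epsilon> > 0"
  shows "\<exists>U. \<forall>u\<ge>U. F (c*u) \<le> \<epsilon> * F u"
proof -
  define K where "K = 2/\<epsilon>"
  have K: "K > 0" using e by (simp add: K_def)
  have "exp K \<ge> 1 + K" by simp
  then have KK: "K \<le> exp K" by linarith
  have "1 / exp K \<le> 1 / K" using KK K by (intro divide_left_mono) auto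
  then have "exp (-K) \<le> 1/K" by (simp add: exp_minus inverse_eq_divide)
  then have eK: "exp (-K) \<le> \<epsilon>/2" by (simp add: K_def)
  obtain U1 where U1: "\<forall>u\<ge>U1. F (u + a u * K) < (exp (-K) + \<epsilon>/2) * F u \<and> F (u + a u * K) > (exp (-K) - \<epsilon>/2) * F u"
    using gm_ev'[of K "\<epsilon>/2"] K e by auto
  obtain U2 where U2: "\<forall>u\<ge>U2. a u \<le> ((c-1)/K) * u" using a_small[of "(c-1)/K"] c K by auto
  show ?thesis
  proof (intro exI[of _ "max 0 (max U1 U2)"] allI impI)
    fix u assume u: "max 0 (max U1 U2) \<le> u"
    have "a u \<le> ((c-1)/K) * u" using U2 u by auto
    then have "a u * K \<le> (c-1) * u" using K by (simp add: field_simps)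
    then have "u + a u * K \<le> c * u" by (simp add: algebra_simps)
    then have "F (c*u) \<le> F (u + a u * K)" by (rule F_anti)
    also have "\<dots> < (exp (-K) + \<epsilon>/2) * F u" using U1 u by auto
    also have "\<dots> \<le> \<epsilon> * F u" using eK F_pos[of u] by (intro mult_right_mono) auto
    finally show "F (c*u) \<le> \<epsilon> * F u" by simp
  qed
qed

end


context gsetup begin

lemma intF[simp]: "integrable M (\<lambda>w. F (v / Y2 w))"
  by (intro integrable_const_bound[where B=1]) (auto simp: F_le1 less_imp_le[OF F_pos])

lemma D_lower:
  assumes u: "u \<ge> 0" and y1: "y1 > 0"
  shows "measure M {w\<in>space M. Y2 w > y1} * F (u/y1) \<le> expectation (\<lambda>w. F (u / Y2 w))"
proof -
  let ?S = "{w\<in>space M. Y2 w > y1}"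
  have S: "?S \<in> sets M" by measurable
  have "measure M ?S * F (u/y1) = expectation (\<lambda>w. indicator ?S w * F (u/y1))"
    by (simp add: Int_absorb2)
  also have "\<dots> \<le> expectation (\<lambda>w. F (u / Y2 w))"
  proof (rule integral_mono)
    show "integrable M (\<lambda>w. indicator ?S w * F (u/y1))"
      using S by (intro integrable_mult_left integrable_real_indicator) (auto simp: emeasure_eq_measure)
    show "integrable M (\<lambda>w. F (u / Y2 w))" by simp
    fix w assume w: "w \<in> space M"
    show "indicator ?S w * F (u/y1) \<le> F (u / Y2 w)"
    proof (cases "w \<in> ?S")
      case True
      then have "Y2 w > y1" by simp
      then have "u / Y2 w \<le> u / y1" using u y1 by (intro divide_left_mono) auto
      then show ?thesis using True by (simp add: F_anti)
    next
      case False
      then show ?thesis using F_pos[of "u / Y2 w"] by simp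
    qed
  qed
  finally show ?thesis .
qed

lemma D_pos: "u \<ge> 0 \<Longrightarrow> expectation (\<lambda>w. F (u / Y2 w)) > 0"
proof -
  assume u: "u \<ge> 0"
  have "measure M {w\<in>space M. Y2 w > 1/2} * F (u/(1/2)) > 0"
    using Y2_lt1[of "1/2"] F_pos by simp
  also have "\<dots> \<le> expectation (\<lambda>w. F (u / Y2 w))" by (rule D_lower) (use u in auto)
  finally show ?thesis .
qed

lemma exp_lip: fixes s t :: real assumes "0 \<le> s" "s \<le> t" shows "exp (-s) - exp (-t) \<le> t - s"
proof -
  have 1: "exp (-(t-s)) \<ge> 1 - (t-s)" using exp_ge_add_one_self[of "-(t-s)"] by linarith
  have "exp (-s) - exp (-t) = exp (-s) * (1 - exp (-(t-s)))"
    by (simp add: algebra_simps flip: exp_add)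
  also have "\<dots> \<le> 1 * (1 - exp (-(t-s)))"
    using assms by (intro mult_right_mono) auto
  also have "\<dots> \<le> t - s" using 1 by simp
  finally show ?thesis .
qed

lemma eminus1: "exp (-1::real) \<le> 1/2"
proof -
  have "exp (1::real) \<ge> 2" using exp_ge_add_one_self[of "1::real"] by simp
  then show ?thesis by (simp add: exp_minus inverse_eq_divide divide_simps)
qed

lemma upper:
  assumes t: "t \<ge> 0" and e: "\<epsilon> > 0"
  shows "\<exists>U. \<forall>u\<ge>U. expectation (\<lambda>w. F ((u + a u * t) / Y2 w)) \<le> (exp (-t) + \<epsilon>) * expectation (\<lambda>w. F (u / Y2 w))"
proof -
  define \<epsilon>u where "\<epsilon>u = \<epsilon>/(3*(t+1))"
  have eu: "\<epsilon>u > 0" using e t by (simp add: \<epsilon>u_def)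
  define s where "s = t/(1+\<epsilon>u)"
  have s0: "s \<ge> 0" using t eu by (simp add: s_def)
  have st: "s \<le> t" using t eu mult_nonneg_nonneg[of t \<epsilon>u] by (simp add: s_def divide_le_eq algebra_simps)
  have "t - s = t * \<epsilon>u / (1+\<epsilon>u)" using eu by (simp add: s_def field_simps)
  also have "\<dots> \<le> t * \<epsilon>u" using t eu mult_nonneg_nonneg[of "t*\<epsilon>u" \<epsilon>u] by (simp add: divide_le_eq algebra_simps)
  also have "\<dots> \<le> \<epsilon>/3" using t e by (simp add: \<epsilon>u_def field_simps)
  finally have "t - s \<le> \<epsilon>/3" .
  then have es: "exp (-s) \<le> exp (-t) + \<epsilon>/3" using exp_lip[OF s0 st] by linarith
  obtain Ua where Ua: "\<forall>u\<ge>Ua. \<forall>h\<in>{0..1}. a (exp h * u) \<le> (1+\<epsilon>u) * exp (-\<tau>*h) * a u \<and> (1-\<epsilon>u) * exp (-\<tau>*h) * a u \<le> a (exp h * u)"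
    using uct[OF eu] by auto
  obtain G where G: "\<forall>u\<ge>G. F (u + a u * s) < (exp (-s) + \<epsilon>/3) * F u \<and> F (u + a u * s) > (exp (-s) - \<epsilon>/3) * F u"
    using gm_ev'[of s "\<epsilon>/3"] s0 e by auto
  define p where "p = measure M {w\<in>space M. Y2 w > 3/4}"
  have p: "p > 0" using Y2_lt1[of "3/4"] by (simp add: p_def)
  obtain R where R: "\<forall>x\<ge>R. F (3/2 * x) \<le> (\<epsilon>/3 * p) * F x"
    using rapid[of "3/2" "\<epsilon>/3 * p"] e p by auto
  define U where "U = max (max Ua G) (max (3/4*R) 1)"
  show ?thesis
  proof (intro exI[of _ U] allI impI)
    fix u assume uU: "U \<le> u"
    have u1: "u \<ge> 1" and uUa: "u \<ge> Ua" and uG: "u \<ge> G" and uR: "4/3*u \<ge> R" using uU by (auto simp: U_def)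
    have u0: "u > 0" using u1 by simp
    have au: "a u > 0" using apos by simp
    let ?S = "{w\<in>space M. Y2 w > 1}"
    have S: "?S \<in> sets M" by measurable
    have pw: "F ((u + a u * t) / Y2 w) \<le> (exp (-t) + 2*\<epsilon>/3) * F (u / Y2 w) + F (2*u) + indicator ?S w"
      if w: "w \<in> space M" for w
    proof -
      define y where "y = Y2 w"
      have y0: "y > 0" using Y2pos w by (simp add: y_def)
      have c0: "(exp (-t) + 2*\<epsilon>/3) * F (u / Y2 w) \<ge> 0" using e F_pos[of "u / Y2 w"] by simp
      have F2: "F (2*u) \<ge> 0" using F_pos[of "2*u"] by simp
      have mono1: "F ((u + a u * t) / y) \<le> F (u / y)"
        using y0 au t by (intro F_anti divide_right_mono) auto
      show ?thesis
      proof (cases "y > 1")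
        case True
        then have "indicator ?S w = (1::real)" using w by (simp add: y_def)
        then show ?thesis using c0 F2 F_le1[of "(u + a u * t) / Y2 w"] by simp
      next
        case False
        then have y1: "y \<le> 1" by simp
        show ?thesis
        proof (cases "y < 1/2")
          case True
          have "2*u \<le> u / y" using True y0 u0 by (simp add: field_simps)
          then have "F (u / y) \<le> F (2*u)" by (rule F_anti)
          moreover have "0 \<le> (indicator ?S w :: real)" by simp
          ultimately show ?thesis using mono1 c0 unfolding y_def by linarith
        next
          case False
          then have yh: "y \<ge> 1/2" by simp
          define h where "h = - ln y"
          have h0: "h \<ge> 0" using y1 y0 by (simp add: h_def)
          have "exp (-1) \<le> y" using eminus1 yh by simp
          then have "-1 \<le> ln y" using y0 by (simp add: ln_ge_iff)
          then have h1: "h \<le> 1" by (simp add: h_def)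
          have eh: "exp h = 1 / y" using y0 by (simp add: h_def exp_minus inverse_eq_divide)
          define v where "v = exp h * u"
          have vy: "v = u / y" by (simp add: v_def eh)
          have vu: "v \<ge> u" using h0 u0 by (simp add: v_def)
          have av: "a v \<le> (1+\<epsilon>u) * exp (-\<tau>*h) * a u" using Ua[rule_format, OF uUa, of h] h0 h1 by (simp add: v_def)
          have "(1+\<tau>)*h \<ge> 0" using tau h0 by (intro mult_nonneg_nonneg) auto
          then have "h + \<tau>*h \<ge> 0" by (simp add: distrib_right)
          then have "-\<tau>*h \<le> h" by simp
          then have eth: "exp (-\<tau>*h) \<le> exp h" by simp
          have "a v * s \<le> (1+\<epsilon>u) * exp (-\<tau>*h) * a u * s" using av s0 by (intro mult_right_mono) auto
          also have "\<dots> = exp (-\<tau>*h) * a u * t" using eu by (simp add: s_def field_simps)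
          also have "\<dots> \<le> exp h * a u * t" using eth au t by (intro mult_right_mono) auto
          also have "\<dots> = a u * t / y" by (simp add: eh)
          finally have "v + a v * s \<le> (u + a u * t) / y" using vy by (simp add: add_divide_distrib)
          then have "F ((u + a u * t) / y) \<le> F (v + a v * s)" by (rule F_anti)
          also have "\<dots> < (exp (-s) + \<epsilon>/3) * F v" using G uG vu by auto
          also have "\<dots> \<le> (exp (-t) + 2*\<epsilon>/3) * F v" using es F_pos[of v] by (intro mult_right_mono) auto
          finally have "F ((u + a u * t) / y) \<le> (exp (-t) + 2*\<epsilon>/3) * F (u / y)" using vy by simp
          moreover have "0 \<le> (indicator ?S w :: real)" by simp
          ultimately show ?thesis using F2 unfolding y_def by linarith
        qed
      qed
    qed
    have "expectation (\<lambda>w. F ((u + a u * t) / Y2 w)) \<le> expectation (\<lambda>w. (exp (-t) + 2*\<epsilon>/3) * F (u / Y2 w) + F (2*u) + indicator ?S w)"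
      using pw S by (intro integral_mono) (auto intro!: integrable_real_indicator simp: emeasure_eq_measure)
    also have "\<dots> = expectation (\<lambda>w. (exp (-t) + 2*\<epsilon>/3) * F (u / Y2 w) + F (2*u)) + expectation (indicator ?S)"
      by (rule Bochner_Integration.integral_add) (use S in \<open>auto intro!: integrable_real_indicator simp: emeasure_eq_measure\<close>)
    also have "expectation (\<lambda>w. (exp (-t) + 2*\<epsilon>/3) * F (u / Y2 w) + F (2*u)) = expectation (\<lambda>w. (exp (-t) + 2*\<epsilon>/3) * F (u / Y2 w)) + expectation (\<lambda>w. F (2*u))"
      by (rule Bochner_Integration.integral_add) auto
    also have "expectation (indicator ?S) = measure M ?S" using S by (simp add: Int_absorb2)
    also have "expectation (\<lambda>w. (exp (-t) + 2*\<epsilon>/3) * F (u / Y2 w)) = (exp (-t) + 2*\<epsilon>/3) * expectation (\<lambda>w. F (u / Y2 w))"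
      by simp
    also have "expectation (\<lambda>w. F (2*u)) = F (2*u)" by (simp add: prob_space)
    also have "measure M ?S = 0" using Y2_gt1 .
    also have "F (2*u) \<le> (\<epsilon>/3) * expectation (\<lambda>w. F (u / Y2 w))"
    proof -
      have "F (2*u) = F (3/2 * (4/3*u))" by simp
      also have "\<dots> \<le> (\<epsilon>/3 * p) * F (4/3*u)" by (rule R[rule_format, OF uR])
      also have "\<dots> = (\<epsilon>/3) * (p * F (u/(3/4)))"
      proof -
        have eq: "u/(3/4) = 4/3*u" by simp
        show ?thesis by (simp only: eq mult.assoc)
      qed
      also have "\<dots> \<le> (\<epsilon>/3) * expectation (\<lambda>w. F (u / Y2 w))"
        using D_lower[of u "3/4"] u0 e by (intro mult_left_mono) (auto simp: p_def)
      finally show ?thesis .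
    qed
    finally show "expectation (\<lambda>w. F ((u + a u * t) / Y2 w)) \<le> (exp (-t) + \<epsilon>) * expectation (\<lambda>w. F (u / Y2 w))"
      by (simp add: algebra_simps)
  qed
qed

end

context gsetup begin

lemma lower:
  assumes t: "t \<ge> 0" and e: "\<epsilon> > 0"
  shows "\<exists>U. \<forall>u\<ge>U. (exp (-t) - \<epsilon>) * expectation (\<lambda>w. F (u / Y2 w)) \<le> expectation (\<lambda>w. F ((u + a u * t) / Y2 w))"
proof -
  define \<epsilon>l where "\<epsilon>l = min (1/4) (\<epsilon>/(16*(t+1)))"
  have q: "\<epsilon>/(16*(t+1)) > 0" using e t by simp
  have el1: "\<epsilon>l > 0" unfolding \<epsilon>l_def using q by simp
  have el2: "\<epsilon>l \<le> 1/4" unfolding \<epsilon>l_def by (rule min.cobounded1)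
  have el3: "\<epsilon>l \<le> \<epsilon>/(16*(t+1))" unfolding \<epsilon>l_def by (rule min.cobounded2)
  note el = el1 el2 el3
  define s where "s = t*(1+\<epsilon>l)/(1-\<epsilon>l)"
  have s_t: "s - t = 2*t*\<epsilon>l/(1-\<epsilon>l)" using el by (simp add: s_def field_simps)
  have "2*t*\<epsilon>l/(1-\<epsilon>l) \<le> 4*t*\<epsilon>l"
  proof -
    have "(4*t*\<epsilon>l)*(1/2) \<le> (4*t*\<epsilon>l)*(1-\<epsilon>l)"
      using el t by (intro mult_left_mono) auto
    then have "2*t*\<epsilon>l \<le> 4*t*\<epsilon>l*(1-\<epsilon>l)" by simp
    then show ?thesis using el by (simp add: divide_le_eq)
  qed
  also have "4*t*\<epsilon>l \<le> 4*t*(\<epsilon>/(16*(t+1)))" using el t by (intro mult_left_mono) auto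
  also have "\<dots> \<le> \<epsilon>/4" using t e by (simp add: field_simps)
  finally have st': "s - t \<le> \<epsilon>/4" using s_t by simp
  have "2*t*\<epsilon>l/(1-\<epsilon>l) \<ge> 0" using el t by (intro divide_nonneg_pos mult_nonneg_nonneg) auto
  then have ts: "t \<le> s" using s_t by linarith
  have s0: "s \<ge> 0" using ts t by simp
  have es: "exp (-t) - \<epsilon>/4 \<le> exp (-s)" using exp_lip[OF t ts] st' by linarith
  define h0 where "h0 = min 1 (ln (1+\<epsilon>l)/(2+\<tau>))"
  have tp: "2+\<tau> > 0" using tau by simp
  have lnp: "ln (1+\<epsilon>l) > 0" using el by simp
  have h0: "h0 > 0" "h0 \<le> 1" "h0 \<le> ln (1+\<epsilon>l)/(2+\<tau>)" using tp lnp by (auto simp: h0_def)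
  define y0 where "y0 = exp (-h0)"
  have y0: "0 < y0" "y0 < 1" using h0 by (auto simp: y0_def)
  define y1 where "y1 = (1+y0)/2"
  have y1: "y0 < y1" "y1 < 1" "0 < y1" using y0 by (auto simp: y1_def)
  define p0 where "p0 = measure M {w\<in>space M. Y2 w > y1}"
  have p0: "p0 > 0" using Y2_lt1[OF y1(2)] by (simp add: p0_def)
  obtain Ua where Ua: "\<forall>u\<ge>Ua. \<forall>h\<in>{0..1}. a (exp h * u) \<le> (1+\<epsilon>l) * exp (-\<tau>*h) * a u \<and> (1-\<epsilon>l) * exp (-\<tau>*h) * a u \<le> a (exp h * u)"
    using uct[OF el(1)] by auto
  obtain G where G: "\<forall>u\<ge>G. F (u + a u * s) < (exp (-s) + \<epsilon>/4) * F u \<and> F (u + a u * s) > (exp (-s) - \<epsilon>/4) * F u"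
    using gm_ev'[of s "\<epsilon>/4"] s0 e by auto
  define c where "c = y1/y0"
  have c: "c > 1" using y0 y1 by (simp add: c_def)
  obtain R where R: "\<forall>x\<ge>R. F (c * x) \<le> (\<epsilon>/4 * p0) * F x"
    using rapid[OF c, of "\<epsilon>/4 * p0"] e p0 by auto
  define U where "U = max (max Ua G) (max (R*y1) 1)"
  define cc where "cc = exp (-s) - \<epsilon>/4"
  have "exp (-s) \<le> 1" using s0 by simp
  then have cc1: "cc \<le> 1" using e unfolding cc_def by linarith
  show ?thesis
  proof (intro exI[of _ U] allI impI)
    fix u assume uU: "U \<le> u"
    have u1: "u \<ge> 1" and uUa: "u \<ge> Ua" and uG: "u \<ge> G" and uR: "R*y1 \<le> u" using uU by (auto simp: U_def)
    have u0: "u > 0" using u1 by simp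
    have au: "a u > 0" using apos by simp
    let ?S = "{w\<in>space M. Y2 w > 1}"
    have S: "?S \<in> sets M" by measurable
    have pw: "cc * F (u / Y2 w) - F (u/y0) - indicator ?S w \<le> F ((u + a u * t) / Y2 w)"
      if w: "w \<in> space M" for w
    proof -
      define y where "y = Y2 w"
      have y00: "y > 0" using Y2pos w by (simp add: y_def)
      have ind0: "0 \<le> (indicator ?S w :: real)" by simp
      have Fy: "cc * F (u / y) \<le> F (u / y)"
        using mult_right_mono[OF cc1, of "F (u/y)"] F_pos[of "u/y"] by simp
      have FL: "F ((u + a u * t) / y) > 0" by (rule F_pos)
      have Fy0: "F (u/y0) > 0" by (rule F_pos)
      show ?thesis
      proof (cases "y > 1")
        case True
        then have "indicator ?S w = (1::real)" using w by (simp add: y_def)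
        moreover have "F (u/y) \<le> 1" by (rule F_le1)
        ultimately show ?thesis using Fy FL Fy0 unfolding y_def by linarith
      next
        case False
        then have yle1: "y \<le> 1" by simp
        show ?thesis
        proof (cases "y < y0")
          case True
          have "u / y0 \<le> u / y" using True y00 u0 by (intro divide_left_mono) auto
          then have "F (u/y) \<le> F (u/y0)" by (rule F_anti)
          then show ?thesis using Fy FL ind0 unfolding y_def by linarith
        next
          case False
          then have yy0: "y \<ge> y0" by simp
          define h where "h = - ln y"
          have hh0: "h \<ge> 0" using yle1 y00 by (simp add: h_def)
          have "ln y0 \<le> ln y" using yy0 y0 by simp
          then have hh1: "h \<le> h0" by (simp add: h_def y0_def)
          have eh: "exp h = 1 / y" using y00 by (simp add: h_def exp_minus inverse_eq_divide)
          define v where "v = exp h * u"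
          have vy: "v = u / y" by (simp add: v_def eh)
          have vu: "v \<ge> u" using hh0 u0 by (simp add: v_def)
          have av: "(1-\<epsilon>l) * exp (-\<tau>*h) * a u \<le> a v"
            using Ua[rule_format, OF uUa, of h] hh0 hh1 h0 by (simp add: v_def)
          have "(1+\<tau>)*h \<le> (2+\<tau>)*h" using hh0 by (simp add: algebra_simps)
          also have "\<dots> \<le> (2+\<tau>)*h0" using hh1 tp by (intro mult_left_mono) auto
          also have "\<dots> \<le> ln (1+\<epsilon>l)" using h0(3) tp by (simp add: field_simps)
          finally have "exp ((1+\<tau>)*h) \<le> exp (ln (1+\<epsilon>l))" by (simp only: exp_le_cancel_iff)
          also have "exp (ln (1+\<epsilon>l)) = 1+\<epsilon>l" using el by simp
          finally have "exp ((1+\<tau>)*h) \<le> 1+\<epsilon>l" .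
          have eq1: "exp (-\<tau>*h) * exp ((1+\<tau>)*h) = exp h" by (simp add: algebra_simps flip: exp_add)
          have "a u * t / y = exp h * a u * t" by (simp add: eh)
          also have "\<dots> = exp (-\<tau>*h) * exp ((1+\<tau>)*h) * a u * t" by (simp only: eq1)
          also have "\<dots> \<le> exp (-\<tau>*h) * (1+\<epsilon>l) * a u * t"
            using \<open>exp ((1+\<tau>)*h) \<le> 1+\<epsilon>l\<close> au t by (intro mult_right_mono mult_left_mono) auto
          also have "\<dots> = ((1-\<epsilon>l) * exp (-\<tau>*h) * a u) * s" using el by (simp add: s_def field_simps)
          also have "\<dots> \<le> a v * s" using av s0 by (intro mult_right_mono) auto
          finally have "(u + a u * t) / y \<le> v + a v * s" using vy by (simp add: add_divide_distrib)
          then have "F (v + a v * s) \<le> F ((u + a u * t) / y)" by (rule F_anti)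
          moreover have "F (v + a v * s) > cc * F v" using G uG vu by (auto simp: cc_def)
          ultimately have "cc * F (u/y) \<le> F ((u + a u * t) / y)" using vy by simp
          then show ?thesis using Fy0 ind0 unfolding y_def by linarith
        qed
      qed
    qed
    have int1: "integrable M (\<lambda>w. cc * F (u / Y2 w) - F (u/y0))" by simp
    have int2: "integrable M (indicator ?S :: 's \<Rightarrow> real)"
      using S by (auto intro!: integrable_real_indicator simp: emeasure_eq_measure)
    have "expectation (\<lambda>w. cc * F (u / Y2 w) - F (u/y0) - indicator ?S w) \<le> expectation (\<lambda>w. F ((u + a u * t) / Y2 w))"
      using pw int1 int2 by (intro integral_mono) auto
    moreover have "expectation (\<lambda>w. cc * F (u / Y2 w) - F (u/y0) - indicator ?S w) = expectation (\<lambda>w. cc * F (u / Y2 w) - F (u/y0)) - expectation (indicator ?S)"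
      by (rule Bochner_Integration.integral_diff) (use int1 int2 in auto)
    moreover have "expectation (\<lambda>w. cc * F (u / Y2 w) - F (u/y0)) = expectation (\<lambda>w. cc * F (u / Y2 w)) - expectation (\<lambda>w. F (u/y0))"
      by (rule Bochner_Integration.integral_diff) auto
    moreover have "expectation (indicator ?S) = measure M ?S" using S by (simp add: Int_absorb2)
    moreover have "expectation (\<lambda>w. F (u/y0)) = F (u/y0)" by (simp add: prob_space)
    moreover have "expectation (\<lambda>w. cc * F (u / Y2 w)) = cc * expectation (\<lambda>w. F (u / Y2 w))" by simp
    ultimately have N1: "cc * expectation (\<lambda>w. F (u / Y2 w)) - F (u/y0) \<le> expectation (\<lambda>w. F ((u + a u * t) / Y2 w))"
      using Y2_gt1 by (simp add: prob_space)
    have "F (u/y0) = F (c * (u/y1))" using y0 y1 by (simp add: c_def)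
    also have "\<dots> \<le> (\<epsilon>/4 * p0) * F (u/y1)"
    proof -
      have "u/y1 \<ge> R" using uR y1 by (simp add: le_divide_eq)
      then show ?thesis by (rule R[rule_format])
    qed
    also have "\<dots> = (\<epsilon>/4) * (p0 * F (u/y1))" by simp
    also have "\<dots> \<le> (\<epsilon>/4) * expectation (\<lambda>w. F (u / Y2 w))"
      using D_lower[of u y1] u0 y1 e by (intro mult_left_mono) (auto simp: p0_def)
    finally have Fb: "F (u/y0) \<le> (\<epsilon>/4) * expectation (\<lambda>w. F (u / Y2 w))" .
    have Dp: "expectation (\<lambda>w. F (u / Y2 w)) > 0" using D_pos u0 by simp
    have "(exp (-t) - \<epsilon>) * expectation (\<lambda>w. F (u / Y2 w)) \<le> (cc - \<epsilon>/4) * expectation (\<lambda>w. F (u / Y2 w))"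
      using es e Dp by (intro mult_right_mono) (auto simp: cc_def)
    also have "\<dots> = cc * expectation (\<lambda>w. F (u / Y2 w)) - (\<epsilon>/4) * expectation (\<lambda>w. F (u / Y2 w))"
      by (simp add: algebra_simps)
    also have "\<dots> \<le> expectation (\<lambda>w. F ((u + a u * t) / Y2 w))" using N1 Fb by linarith
    finally show "(exp (-t) - \<epsilon>) * expectation (\<lambda>w. F (u / Y2 w)) \<le> expectation (\<lambda>w. F ((u + a u * t) / Y2 w))" .
  qed
qed

end

context gsetup begin

lemma main_gmda: "GMDA M (\<lambda>w. Y1 w * Y2 w) a"
  unfolding GMDA_def
proof (intro allI impI)
  fix t :: real assume t: "t \<ge> 0"
  let ?N = "\<lambda>u. expectation (\<lambda>w. F ((u + a u * t) / Y2 w))"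
  let ?D = "\<lambda>u. expectation (\<lambda>w. F (u / Y2 w))"
  have "((\<lambda>u. ?N u / ?D u) \<longlongrightarrow> exp (-t)) at_top"
  proof (rule order_tendstoI)
    fix y assume y: "y < exp (-t)"
    define \<epsilon> where "\<epsilon> = (exp (-t) - y)/2"
    have e: "\<epsilon> > 0" using y by (simp add: \<epsilon>_def)
    obtain U where U: "\<forall>u\<ge>U. (exp (-t) - \<epsilon>) * ?D u \<le> ?N u" using lower[OF t e] by auto
    show "\<forall>\<^sub>F u in at_top. y < ?N u / ?D u"
      unfolding eventually_at_top_linorder
    proof (intro exI[of _ "max U 0"] allI impI)
      fix u assume u: "max U 0 \<le> u"
      have Dp: "?D u > 0" using D_pos u by simp
      have "2*\<epsilon> = exp (-t) - y" by (simp add: \<epsilon>_def)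
      then have "y < exp (-t) - \<epsilon>" using e by linarith
      also have "\<dots> \<le> ?N u / ?D u" using U u Dp by (simp add: le_divide_eq)
      finally show "y < ?N u / ?D u" .
    qed
  next
    fix y assume y: "y > exp (-t)"
    define \<epsilon> where "\<epsilon> = (y - exp (-t))/2"
    have e: "\<epsilon> > 0" using y by (simp add: \<epsilon>_def)
    obtain U where U: "\<forall>u\<ge>U. ?N u \<le> (exp (-t) + \<epsilon>) * ?D u" using upper[OF t e] by auto
    show "\<forall>\<^sub>F u in at_top. ?N u / ?D u < y"
      unfolding eventually_at_top_linorder
    proof (intro exI[of _ "max U 0"] allI impI)
      fix u assume u: "max U 0 \<le> u"
      have Dp: "?D u > 0" using D_pos u by simp
      have "?N u / ?D u \<le> exp (-t) + \<epsilon>" using U u Dp by (simp add: divide_le_eq)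
      also have "\<dots> < y"
      proof -
        have "2*\<epsilon> = y - exp (-t)" by (simp add: \<epsilon>_def)
        then show ?thesis using e by linarith
      qed
      finally show "?N u / ?D u < y" .
    qed
  qed
  then show "((\<lambda>u. measure M {w \<in> space M. Y1 w * Y2 w > u + a u * t} / measure M {w \<in> space M. Y1 w * Y2 w > u}) \<longlongrightarrow> exp (- t)) at_top"
    by (simp only: repr)
qed

end

theorem theorem1p1:
  fixes M :: "'s measure" and Y1 Y2 :: "'s \<Rightarrow> real" and a :: "real \<Rightarrow> real" and \<tau> :: real
  assumes "prob_space M"
    and "Y1 \<in> borel_measurable M" and "Y2 \<in> borel_measurable M"
    and "prob_space.indep_var M borel Y1 borel Y2"
    and "\<forall>w \<in> space M. Y1 w > 0" and "\<forall>w \<in> space M. Y2 w > 0"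
    and "\<forall>u. measure M {w \<in> space M. Y1 w > u} > 0"
    and "\<forall>u. a u > 0"
    and "\<tau> \<ge> -1" and "regularly_varying a (- \<tau>)"
    and "GMDA M Y1 a"
    and "right_endpoint M Y2 = 1"
  shows "GMDA M (\<lambda>w. Y1 w * Y2 w) a"
proof -
  interpret gsetup M Y1 Y2 a \<tau>
    by (intro gsetup.intro gsetup_axioms.intro assms(1-4) assms(6-12))
  show ?thesis by (rule main_gmda)
qed


end
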